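(* Let $(P,A,\lambda)$ be a marked poset and let $x\in\mathcal{O}_{P,A}(\lambda)$. Then $x$ is a vertex of the marked order polytope $\mathcal{O}_{P,A}(\lambda)$ if and only if every connected component of the identity diagram $\mathcal{D}^\lambda_{P,A}(x)$ contains an element of $A$.
   Context: A marked poset $(P,A,\lambda)$ consists of a finite poset $P$, a subset $A\subseteq P$ containing all minimal and all maximal elements of $P$, and a vector $\lambda=(\lambda_a)_{a\in A}\in\mathbb{R}^A$ with $\lambda_a\le\lambda_b$ whenever $a\le b$. The marked order polytope is $\mathcal{O}_{P,A}(\lambda)=\{x\in\mathbb{R}^{P\setminus A}: x_p\le x_q \text{ for } p\le q;\ \lambda_a\le x_p \text{ for } a\le p;\ x_p\le\lambda_b \text{ for } p\le b\}$. For $x\in\mathcal{O}_{P,A}(\lambda)$ put $v(p)=x_p$ if $p\notin A$ and $v(p)=\lambda_p$ if $p\in A$. The identity diagram $\mathcal{D}^\lambda_{P,A}(x)$ contains the Hasse diagram of $P$ (an arrow $p\to q$ whenever $q$ covers $p$), and additionally a reverse arrow $q\to p$ whenever $p\to q$ is a Hasse arrow, $p,q$ are not both in $A$, and $v(p)=v(q)$. A set of nodes is connected if any two of its nodes are joined by a (possibly empty) chain of double arrows $p\rightleftarrows p_1\rightleftarrows\cdots\rightleftarrows p_t\rightleftarrows q$ within the set; connected components are the maximal connected subsets. *)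

theory Defs
  imports "HOL-Analysis.Analysis"
begin

text \<open>A finite poset is modelled as a finite type 'p (the ground set is UNIV) with
  an order relation le.\<close>

definition marked_poset :: "('p::finite \<Rightarrow> 'p \<Rightarrow> bool) \<Rightarrow> 'p set \<Rightarrow> ('p \<Rightarrow> real) \<Rightarrow> bool" where
  "marked_poset le A lam \<longleftrightarrow>
     (\<forall>p. le p p) \<and> (\<forall>p q. le p q \<longrightarrow> le q p \<longrightarrow> p = q) \<and>
     (\<forall>p q r. le p q \<longrightarrow> le q r \<longrightarrow> le p r) \<and>
     (\<forall>p. (\<forall>q. le q p \<longrightarrow> q = p) \<longrightarrow> p \<in> A) \<and>
     (\<forall>p. (\<forall>q. le p q \<longrightarrow> q = p) \<longrightarrow> p \<in> A) \<and>
     (\<forall>a\<in>A. \<forall>b\<in>A. le a b \<longrightarrow> lam a \<le> lam b)"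

text \<open>The marked order polytope, embedded in real^'p: the coordinates indexed by A are
  frozen to the marking lam, the remaining coordinates are the coordinates of R^(P - A).
  Then the coordinate function is exactly the function v of the paper.\<close>

definition marked_order_polytope ::
  "('p::finite \<Rightarrow> 'p \<Rightarrow> bool) \<Rightarrow> 'p set \<Rightarrow> ('p \<Rightarrow> real) \<Rightarrow> (real ^ 'p) set" where
  "marked_order_polytope le A lam =
     {x. (\<forall>a\<in>A. x $ a = lam a) \<and>
         (\<forall>p q. p \<notin> A \<longrightarrow> q \<notin> A \<longrightarrow> le p q \<longrightarrow> x $ p \<le> x $ q) \<and>
         (\<forall>a p. a \<in> A \<longrightarrow> p \<notin> A \<longrightarrow> le a p \<longrightarrow> lam a \<le> x $ p) \<and>
         (\<forall>p b. p \<notin> A \<longrightarrow> b \<in> A \<longrightarrow> le p b \<longrightarrow> x $ p \<le> lam b)}"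

definition covers :: "('p \<Rightarrow> 'p \<Rightarrow> bool) \<Rightarrow> 'p \<Rightarrow> 'p \<Rightarrow> bool" where
  "covers le p q \<longleftrightarrow> le p q \<and> p \<noteq> q \<and> \<not> (\<exists>r. le p r \<and> le r q \<and> r \<noteq> p \<and> r \<noteq> q)"

definition diagram_arrow ::
  "('p::finite \<Rightarrow> 'p \<Rightarrow> bool) \<Rightarrow> 'p set \<Rightarrow> real ^ 'p \<Rightarrow> 'p \<Rightarrow> 'p \<Rightarrow> bool" where
  "diagram_arrow le A x p q \<longleftrightarrow>
     covers le p q \<or> (covers le q p \<and> \<not> (p \<in> A \<and> q \<in> A) \<and> x $ p = x $ q)"

definition double_arrow ::
  "('p::finite \<Rightarrow> 'p \<Rightarrow> bool) \<Rightarrow> 'p set \<Rightarrow> real ^ 'p \<Rightarrow> 'p \<Rightarrow> 'p \<Rightarrow> bool" where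
  "double_arrow le A x p q \<longleftrightarrow> diagram_arrow le A x p q \<and> diagram_arrow le A x q p"

definition diagram_connected ::
  "('p::finite \<Rightarrow> 'p \<Rightarrow> bool) \<Rightarrow> 'p set \<Rightarrow> real ^ 'p \<Rightarrow> 'p set \<Rightarrow> bool" where
  "diagram_connected le A x S \<longleftrightarrow>
     (\<forall>p\<in>S. \<forall>q\<in>S. (\<lambda>a b. a \<in> S \<and> b \<in> S \<and> double_arrow le A x a b)\<^sup>*\<^sup>* p q)"

definition diagram_component ::
  "('p::finite \<Rightarrow> 'p \<Rightarrow> bool) \<Rightarrow> 'p set \<Rightarrow> real ^ 'p \<Rightarrow> 'p set \<Rightarrow> bool" where
  "diagram_component le A x S \<longleftrightarrow>
     diagram_connected le A x S \<and>
     (\<forall>T. diagram_connected le A x T \<longrightarrow> S \<subseteq> T \<longrightarrow> T = S)"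

end

theory Submission
  imports Defs
begin

lemma poly_char:
  assumes mp: "marked_poset le A lam"
  shows "y \<in> marked_order_polytope le A lam \<longleftrightarrow>
    (\<forall>a\<in>A. y $ a = lam a) \<and> (\<forall>p q. le p q \<longrightarrow> (p \<notin> A \<or> q \<notin> A) \<longrightarrow> y $ p \<le> y $ q)"
proof
  assume y: "y \<in> marked_order_polytope le A lam"
  show "(\<forall>a\<in>A. y $ a = lam a) \<and> (\<forall>p q. le p q \<longrightarrow> (p \<notin> A \<or> q \<notin> A) \<longrightarrow> y $ p \<le> y $ q)"
  proof (intro conjI allI impI ballI)
    fix a assume "a \<in> A" then show "y $ a = lam a" using y unfolding marked_order_polytope_def by blast
  next
    fix p q assume "le p q" "p \<notin> A \<or> q \<notin> A"
    then show "y $ p \<le> y $ q" using y unfolding marked_order_polytope_def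
      by (cases "p \<in> A"; cases "q \<in> A") auto
  qed
next
  assume h: "(\<forall>a\<in>A. y $ a = lam a) \<and> (\<forall>p q. le p q \<longrightarrow> (p \<notin> A \<or> q \<notin> A) \<longrightarrow> y $ p \<le> y $ q)"
  then show "y \<in> marked_order_polytope le A lam" unfolding marked_order_polytope_def
    by (smt (verit) mem_Collect_eq)
qed

lemma poly_mono:
  assumes mp: "marked_poset le A lam" and y: "y \<in> marked_order_polytope le A lam"
    and "le p q"
  shows "y $ p \<le> y $ q"
proof (cases "p \<in> A \<and> q \<in> A")
  case True
  then show ?thesis using y mp assms(3) unfolding marked_order_polytope_def marked_poset_def by auto
next
  case False
  then show ?thesis using poly_char[OF mp] y assms(3) by blast
qed

lemma double_arrow_char:
  assumes mp: "marked_poset le A lam"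
  shows "double_arrow le A x p q \<longleftrightarrow>
    (covers le p q \<or> covers le q p) \<and> \<not> (p \<in> A \<and> q \<in> A) \<and> x $ p = x $ q"
proof -
  have "\<not> (covers le p q \<and> covers le q p)" using mp unfolding covers_def marked_poset_def by blast
  then show ?thesis unfolding double_arrow_def diagram_arrow_def by auto
qed

lemma closure_up:
  fixes le :: "'p::finite \<Rightarrow> 'p \<Rightarrow> bool"
  assumes refl: "\<forall>p. le p p" and antisym: "\<forall>p q. le p q \<longrightarrow> le q p \<longrightarrow> p = q"
    and trans: "\<forall>p q r. le p q \<longrightarrow> le q r \<longrightarrow> le p r"
    and mono: "\<forall>p q. le p q \<longrightarrow> v p \<le> (v q::real)"
    and cl: "\<forall>a b. a \<in> C \<longrightarrow> covers le a b \<longrightarrow> v a = v b \<longrightarrow> b \<in> C"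
  shows "p \<in> C \<Longrightarrow> le p q \<Longrightarrow> v p = v q \<Longrightarrow> q \<in> C"
proof (induction "card {r. le p r \<and> le r q}" arbitrary: p q rule: less_induct)
  case less
  show ?case
  proof (cases "p = q")
    case True then show ?thesis using less by simp
  next
    case False
    show ?thesis
    proof (cases "covers le p q")
      case True then show ?thesis using cl less by blast
    next
      case nc: False
      then obtain r where r: "le p r" "le r q" "r \<noteq> p" "r \<noteq> q"
        using False less.prems unfolding covers_def by blast
      have vr: "v r = v p" using mono r less.prems by (metis order_antisym)
      have s1: "{s. le p s \<and> le s r} \<subset> {s. le p s \<and> le s q}"
      proof
        show "{s. le p s \<and> le s r} \<subseteq> {s. le p s \<and> le s q}" using trans r by blast
        have "q \<notin> {s. le p s \<and> le s r}" using antisym r by blast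
        moreover have "q \<in> {s. le p s \<and> le s q}" using refl less.prems by blast
        ultimately show "{s. le p s \<and> le s r} \<noteq> {s. le p s \<and> le s q}" by blast
      qed
      have "card {s. le p s \<and> le s r} < card {s. le p s \<and> le s q}"
        by (rule psubset_card_mono[OF _ s1]) simp
      then have rC: "r \<in> C" using less.hyps[of p r] less.prems r vr by simp
      have s2: "{s. le r s \<and> le s q} \<subset> {s. le p s \<and> le s q}"
      proof
        show "{s. le r s \<and> le s q} \<subseteq> {s. le p s \<and> le s q}" using trans r by blast
        have "p \<notin> {s. le r s \<and> le s q}" using antisym r by blast
        moreover have "p \<in> {s. le p s \<and> le s q}" using refl less.prems by blast
        ultimately show "{s. le r s \<and> le s q} \<noteq> {s. le p s \<and> le s q}" by blast
      qed
      have "card {s. le r s \<and> le s q} < card {s. le p s \<and> le s q}"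
        by (rule psubset_card_mono[OF _ s2]) simp
      then show ?thesis using less.hyps[of r q] rC r vr less.prems by simp
    qed
  qed
qed

lemma dsym: "double_arrow le A x p q \<Longrightarrow> double_arrow le A x q p"
  unfolding double_arrow_def by blast

lemma comp_of:
  fixes le :: "'p::finite \<Rightarrow> 'p \<Rightarrow> bool"
  shows "diagram_component le A x {q. (double_arrow le A x)\<^sup>*\<^sup>* p q}"
proof -
  define R where "R = double_arrow le A x"
  define Cp where "Cp = {q. R\<^sup>*\<^sup>* p q}"
  define R' where "R' = (\<lambda>a b. a \<in> Cp \<and> b \<in> Cp \<and> R a b)"
  have path: "R'\<^sup>*\<^sup>* p q" if "R\<^sup>*\<^sup>* p q" for q
    using that
  proof (induction rule: rtranclp_induct)
    case base then show ?case by simp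
  next
    case (step y z)
    have "R' y z" unfolding R'_def Cp_def using step by auto
    then show ?case using step by (meson rtranclp.rtrancl_into_rtrancl)
  qed
  have sR': "symp R'" unfolding symp_def R'_def R_def using dsym by blast
  have conn: "diagram_connected le A x Cp"
    unfolding diagram_connected_def
  proof (intro ballI)
    fix q1 q2 assume "q1 \<in> Cp" "q2 \<in> Cp"
    then have "R'\<^sup>*\<^sup>* p q1" "R'\<^sup>*\<^sup>* p q2" using path Cp_def by auto
    then have "R'\<^sup>*\<^sup>* q1 q2" using sympD[OF symp_rtranclp[OF sR']] by (meson rtranclp_trans)
    then show "(\<lambda>a b. a \<in> Cp \<and> b \<in> Cp \<and> double_arrow le A x a b)\<^sup>*\<^sup>* q1 q2"
      unfolding R'_def R_def by simp
  qed
  have "T = Cp" if T: "diagram_connected le A x T" "Cp \<subseteq> T" for T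
  proof
    show "T \<subseteq> Cp"
    proof
      fix t assume "t \<in> T"
      moreover have "p \<in> T" using T Cp_def by auto
      ultimately have "(\<lambda>a b. a \<in> T \<and> b \<in> T \<and> double_arrow le A x a b)\<^sup>*\<^sup>* p t"
        using T unfolding diagram_connected_def by blast
      then have "R\<^sup>*\<^sup>* p t" unfolding R_def
        by (rule mono_rtranclp[rule_format, rotated]) blast
      then show "t \<in> Cp" unfolding Cp_def by simp
    qed
  qed (use T in auto)
  then show ?thesis using conn unfolding diagram_component_def Cp_def R_def by blast
qed

lemma closure_C:
  fixes le :: "'p::finite \<Rightarrow> 'p \<Rightarrow> bool"
  assumes mp: "marked_poset le A lam" and comp: "diagram_component le A x C"
    and CA: "C \<inter> A = {}"
    and a: "a \<in> C" and cov: "covers le a b \<or> covers le b a" and eq: "x $ a = x $ b"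
  shows "b \<in> C"
proof -
  have ab: "double_arrow le A x a b" using double_arrow_char[OF mp] cov eq a CA by blast
  have ba: "double_arrow le A x b a" using dsym[OF ab] .
  let ?S = "insert b C"
  let ?RS = "\<lambda>u w. u \<in> ?S \<and> w \<in> ?S \<and> double_arrow le A x u w"
  let ?RC = "\<lambda>u w. u \<in> C \<and> w \<in> C \<and> double_arrow le A x u w"
  have Cc: "diagram_connected le A x C" using comp unfolding diagram_component_def by blast
  have up: "?RS\<^sup>*\<^sup>* u w" if "u \<in> C" "w \<in> C" for u w
  proof -
    have "?RC\<^sup>*\<^sup>* u w" using Cc that unfolding diagram_connected_def by blast
    then show ?thesis by (rule mono_rtranclp[rule_format, rotated]) blast
  qed
  have "diagram_connected le A x ?S"
    unfolding diagram_connected_def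
  proof (intro ballI)
    fix u w assume u: "u \<in> ?S" and w: "w \<in> ?S"
    have e1: "?RS b a" using ab ba a by blast
    have e2: "?RS a b" using ab a by blast
    show "?RS\<^sup>*\<^sup>* u w"
    proof (cases "u = b")
      case True
      show ?thesis
      proof (cases "w = b")
        case True then show ?thesis using \<open>u = b\<close> by simp
      next
        case False then have "w \<in> C" using w by simp
        then show ?thesis using True converse_rtranclp_into_rtranclp[OF e1 up[OF a \<open>w \<in> C\<close>]]
          by simp
      qed
    next
      case False then have uC: "u \<in> C" using u by simp
      show ?thesis
      proof (cases "w = b")
        case True then show ?thesis using rtranclp.rtrancl_into_rtrancl[OF up[OF uC a] e2]
          by simp
      next
        case False then show ?thesis using up[OF uC] w by simp
      qed
    qed
  qed
  then have "?S = C" using comp unfolding diagram_component_def by blast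
  then show ?thesis by blast
qed

theorem theorem2:
  fixes le :: "'p::finite \<Rightarrow> 'p \<Rightarrow> bool" and A :: "'p set" and lam :: "'p \<Rightarrow> real"
    and x :: "real ^ 'p"
  assumes "marked_poset le A lam"
    and "x \<in> marked_order_polytope le A lam"
  shows "x extreme_point_of (marked_order_polytope le A lam) \<longleftrightarrow>
         (\<forall>C. diagram_component le A x C \<longrightarrow> (\<exists>a\<in>A. a \<in> C))"
proof
  note mp = assms(1) and xP = assms(2)
  let ?P = "marked_order_polytope le A lam"
  have po: "\<forall>p. le p p" "\<forall>p q. le p q \<longrightarrow> le q p \<longrightarrow> p = q"
    "\<forall>p q r. le p q \<longrightarrow> le q r \<longrightarrow> le p r" using mp unfolding marked_poset_def by blast+
  have xmono: "\<forall>p q. le p q \<longrightarrow> x $ p \<le> x $ q" using poly_mono[OF mp xP] by blast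
  assume ext: "x extreme_point_of ?P"
  show "\<forall>C. diagram_component le A x C \<longrightarrow> (\<exists>a\<in>A. a \<in> C)"
  proof (intro allI impI, rule ccontr)
    fix C assume comp: "diagram_component le A x C" and nA: "\<not> (\<exists>a\<in>A. a \<in> C)"
    then have CA: "C \<inter> A = {}" by blast
    have "C \<noteq> {}"
    proof
      assume "C = {}"
      fix p :: 'p
      have "diagram_connected le A x {p}" unfolding diagram_connected_def by simp
      then show False using comp \<open>C = {}\<close> unfolding diagram_component_def by blast
    qed
    then obtain c where c: "c \<in> C" by blast
    have cl: "\<forall>a b. a \<in> C \<longrightarrow> covers le a b \<longrightarrow> x $ a = x $ b \<longrightarrow> b \<in> C"
      using closure_C[OF mp comp CA] by blast
    have upC: "q \<in> C" if "p \<in> C" "le p q" "x $ p = x $ q" for p q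
      using closure_up[of le "\<lambda>i. x $ i" C, OF po xmono cl] that by blast
    let ?le' = "\<lambda>a b. le b a"
    have cov': "covers ?le' a b = covers le b a" for a b unfolding covers_def by blast
    have cl': "\<forall>a b. a \<in> C \<longrightarrow> covers ?le' a b \<longrightarrow> - x $ a = - x $ b \<longrightarrow> b \<in> C"
      using closure_C[OF mp comp CA] cov' by auto
    have po': "\<forall>p. ?le' p p" "\<forall>p q. ?le' p q \<longrightarrow> ?le' q p \<longrightarrow> p = q"
      "\<forall>p q r. ?le' p q \<longrightarrow> ?le' q r \<longrightarrow> ?le' p r" using po by blast+
    have xmono': "\<forall>p q. ?le' p q \<longrightarrow> - x $ p \<le> - x $ q" using xmono by auto
    have downC: "q \<in> C" if "p \<in> C" "le q p" "x $ p = x $ q" for p q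
      using closure_up[of ?le' "\<lambda>i. - x $ i" C, OF po' xmono' cl'] that by auto
    define D where "D = (\<lambda>(p,q). x $ q - x $ p) ` {(p,q). le p q \<and> (p \<in> C) \<noteq> (q \<in> C)}"
    have Dpos: "d > 0" if dD: "d \<in> D" for d
    proof -
      obtain p q where pq: "le p q" "(p \<in> C) \<noteq> (q \<in> C)" "d = x $ q - x $ p"
        using dD unfolding D_def by force
      have "x $ p \<le> x $ q" using xmono pq by blast
      moreover have "x $ p \<noteq> x $ q" using pq upC downC by metis
      ultimately show ?thesis using pq by simp
    qed
    have fD: "finite D" unfolding D_def by simp
    define eps where "eps = Min (insert 1 D) / 2"
    have Mpos: "Min (insert 1 D) > 0" using fD Dpos by (simp add: Min_gr_iff)
    have eps: "eps > 0" unfolding eps_def using Mpos by simp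
    have epsD: "2 * eps \<le> d" if "d \<in> D" for d unfolding eps_def using fD that by simp
    define e :: "real ^ 'p" where "e = (\<chi> i. if i \<in> C then 1 else 0)"
    have inP: "x + s *\<^sub>R e \<in> ?P" if s: "\<bar>s\<bar> \<le> eps" for s
      unfolding poly_char[OF mp]
    proof (intro conjI allI impI ballI)
      fix a assume "a \<in> A"
      then show "(x + s *\<^sub>R e) $ a = lam a" using CA xP poly_char[OF mp] e_def by auto
    next
      fix p q assume pq: "le p q" "p \<notin> A \<or> q \<notin> A"
      show "(x + s *\<^sub>R e) $ p \<le> (x + s *\<^sub>R e) $ q"
      proof (cases "(p \<in> C) = (q \<in> C)")
        case True then show ?thesis using xmono pq e_def by auto
      next
        case False
        then have "x $ q - x $ p \<in> D" unfolding D_def using pq by auto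
        then have "2 * eps \<le> x $ q - x $ p" using epsD by blast
        then show ?thesis using s e_def by (auto simp: abs_le_iff)
      qed
    qed
    have y: "x + eps *\<^sub>R e \<in> ?P" using inP eps by simp
    have z: "x + (- eps) *\<^sub>R e \<in> ?P" using inP[of "- eps"] eps by simp
    have ne: "x + eps *\<^sub>R e \<noteq> x + (- eps) *\<^sub>R e"
    proof
      assume "x + eps *\<^sub>R e = x + (- eps) *\<^sub>R e"
      then have h: "(x + eps *\<^sub>R e) $ c = (x + (- eps) *\<^sub>R e) $ c" by (rule arg_cong)
      have "(x + eps *\<^sub>R e) $ c = x $ c + eps" "(x + (- eps) *\<^sub>R e) $ c = x $ c - eps"
        using c by (simp_all add: e_def)
      then show False using h eps by simp
    qed
    have mid: "x = midpoint (x + eps *\<^sub>R e) (x + (- eps) *\<^sub>R e)"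
      by (simp add: midpoint_def vec_eq_iff field_simps)
    have "x \<in> open_segment (x + eps *\<^sub>R e) (x + (- eps) *\<^sub>R e)"
      using ne midpoint_in_open_segment mid by metis
    then show False using ext y z unfolding extreme_point_of_def by blast
  qed
next
  note mp = assms(1) and xP = assms(2)
  let ?P = "marked_order_polytope le A lam"
  assume H: "\<forall>C. diagram_component le A x C \<longrightarrow> (\<exists>a\<in>A. a \<in> C)"
  have "\<not> x \<in> open_segment y z" if y: "y \<in> ?P" and z: "z \<in> ?P" for y z
  proof
    assume xs: "x \<in> open_segment y z"
    then obtain u where u: "0 < u" "u < 1" "x = (1 - u) *\<^sub>R y + u *\<^sub>R z"
      unfolding in_segment by blast
    have xy: "x \<noteq> y" using xs by (simp add: open_segment_def)
    have step: "y $ q - x $ q = y $ r - x $ r" if "double_arrow le A x q r" for q r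
    proof -
      have d: "(covers le q r \<or> covers le r q) \<and> \<not> (q \<in> A \<and> r \<in> A) \<and> x $ q = x $ r"
        using that double_arrow_char[OF mp] by blast
      have xq: "x $ q = (1 - u) * y $ q + u * z $ q" "x $ r = (1 - u) * y $ r + u * z $ r"
        using u by simp_all
      show ?thesis
      proof (cases "covers le q r")
        case True
        then have "le q r" unfolding covers_def by blast
        then have "y $ q \<le> y $ r" "z $ q \<le> z $ r"
          using d y z poly_char[OF mp] by blast+
        then have "y $ q = y $ r" using xq d u
          by (smt (verit, ccfv_SIG) mult_left_mono mult_le_cancel_left_pos)
        then show ?thesis using d by simp
      next
        case False
        then have "le r q" using d unfolding covers_def by blast
        then have "y $ r \<le> y $ q" "z $ r \<le> z $ q"
          using d y z poly_char[OF mp] by blast+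
        then have "y $ q = y $ r" using xq d u
          by (smt (verit, ccfv_SIG) mult_left_mono mult_le_cancel_left_pos)
        then show ?thesis using d by simp
      qed
    qed
    have "y $ p = x $ p" for p
    proof -
      obtain a where a: "a \<in> A" "(double_arrow le A x)\<^sup>*\<^sup>* p a"
        using H comp_of[of le A x p] by blast
      have "y $ p - x $ p = y $ a - x $ a" using a(2)
        by (induction rule: rtranclp_induct) (use step in auto)
      moreover have "y $ a = x $ a" using a(1) y xP poly_char[OF mp] by simp
      ultimately show ?thesis by simp
    qed
    then have "y = x" by (simp add: vec_eq_iff)
    then show False using xy by simp
  qed
  then show "x extreme_point_of ?P" using xP unfolding extreme_point_of_def by blast
qed

end
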